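(* Consider the problem and algorithm AC2CD described in the context. At every outer iteration $k$, \[ f(x^k)-f(x^{k+1})\ge\frac{\gamma}{A_u}\,\|x^{k+1}-x^k\|_{\langle j(k)\rangle}^2. \]
   Context: Problem: minimize $f(x)$ subject to $e^T x = b$ and $l_i \le x_i \le u_i$ ($i=1,\dots,n$), where $n\ge 2$, $e$ is the all-ones vector, $b\in\mathbb{R}$, $l_i\in\mathbb{R}\cup\{-\infty\}$, $u_i\in\mathbb{R}\cup\{+\infty\}$, $l_i<u_i$, and $f:\mathbb{R}^n\to\mathbb{R}$ is continuously differentiable with $\nabla f$ Lipschitz continuous on $\mathbb{R}^n$. $\mathcal F$ is the feasible set, $e_i$ the $i$th unit vector. $\|x\|_{\langle j\rangle}=\sqrt{\sum_{i\ne j}x_i^2}$. For $x\in\mathcal F$, $D_h(x)=\min\{x_h-l_h,u_h-x_h\}$. Algorithm AC2CD with parameters $\tau\in(0,1]$, $\gamma,\delta\in(0,1)$, $0<A_l\le A_u<\infty$ and starting point $x^0\in\mathcal F$: for $k=0,1,2,\dots$: let $D^k=\max_h D_h(x^k)$; choose $j(k)$ with $D_{j(k)}(x^k)\ge\tau D^k$; choose a permutation $(p^k_1,\dots,p^k_n)$ of $\{1,\dots,n\}$; set $z^{k,1}=x^k$; for $i=1,\dots,n$ (inner iteration $(k,i)$): $g^{k,i}=\nabla_{j(k)}f(z^{k,i})-\nabla_{p^k_i}f(z^{k,i})$, $d^{k,i}=g^{k,i}(e_{p^k_i}-e_{j(k)})$; $\bar\alpha^{k,i}=\min\{u_{p^k_i}-z^{k,i}_{p^k_i},z^{k,i}_{j(k)}-l_{j(k)}\}/g^{k,i}$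 if $g^{k,i}>0$, $=\min\{z^{k,i}_{p^k_i}-l_{p^k_i},u_{j(k)}-z^{k,i}_{j(k)}\}/|g^{k,i}|$ if $g^{k,i}<0$, $=0$ if $g^{k,i}=0$; choose $A^{k,i}\in[A_l,A_u]$, set $\Delta^{k,i}=\min\{\bar\alpha^{k,i},A^{k,i}\}$; starting from $\alpha=\Delta^{k,i}$, while $f(z^{k,i}+\alpha d^{k,i})>f(z^{k,i})+\gamma\alpha\nabla f(z^{k,i})^Td^{k,i}$ replace $\alpha$ by $\delta\alpha$; $\alpha^{k,i}$ is the final $\alpha$ and $z^{k,i+1}=z^{k,i}+\alpha^{k,i}d^{k,i}$. Then $x^{k+1}=z^{k,n+1}$. Standing assumptions: $\mathcal L_0=\{x\in\mathcal F: f(x)\le f(x^0)\}$ is nonempty and compact, and every $x\in\mathcal L_0$ has some index $i$ with $l_i<x_i<u_i$. *)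

theory Defs
  imports "HOL-Analysis.Analysis" "HOL-Library.Extended_Real"
begin

text \<open>Vectors of R^n are rendered as real^'n (index type 'n, n = CARD('n)).
  Bounds l_i in R \<union> {-\<infinity>}, u_i in R \<union> {+\<infinity>} are extended reals.\<close>

definition feasible :: "('n::finite \<Rightarrow> ereal) \<Rightarrow> ('n \<Rightarrow> ereal) \<Rightarrow> real \<Rightarrow> real^'n \<Rightarrow> bool" where
  "feasible l u b x \<longleftrightarrow> (\<Sum>i\<in>UNIV. x $ i) = b \<and> (\<forall>i. l i \<le> ereal (x $ i) \<and> ereal (x $ i) \<le> u i)"

definition Dh :: "('n::finite \<Rightarrow> ereal) \<Rightarrow> ('n \<Rightarrow> ereal) \<Rightarrow> real^'n \<Rightarrow> 'n \<Rightarrow> ereal" where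
  "Dh l u x h = min (ereal (x $ h) - l h) (u h - ereal (x $ h))"

definition norm_excl :: "'n::finite \<Rightarrow> real^'n \<Rightarrow> real" where
  "norm_excl j x = sqrt (\<Sum>i\<in>UNIV - {j}. (x $ i)^2)"

text \<open>maximal feasible step \<bar>\<alpha> along d = g (e_p - e_j) from z\<close>
definition alpha_bar :: "('n::finite \<Rightarrow> ereal) \<Rightarrow> ('n \<Rightarrow> ereal) \<Rightarrow> real^'n \<Rightarrow> 'n \<Rightarrow> 'n \<Rightarrow> real \<Rightarrow> ereal" where
  "alpha_bar l u z j p g =
     (if g > 0 then min (u p - ereal (z $ p)) (ereal (z $ j) - l j) / ereal g
      else if g < 0 then min (ereal (z $ p) - l p) (u j - ereal (z $ j)) / ereal \<bar>g\<bar>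
      else 0)"

end

theory Submission
  imports Defs
begin

lemma ereal_div_nonneg: "0 < (g::real) \<Longrightarrow> 0 \<le> (X::ereal) \<Longrightarrow> 0 \<le> X / ereal g"
  by (cases X) auto

lemma ereal_le_div: "0 < (g::real) \<Longrightarrow> ereal a \<le> (X::ereal) / ereal g \<Longrightarrow> ereal (a * g) \<le> X"
  by (cases X) (auto simp: field_simps)

lemma ereal_up: "ereal c \<le> U - ereal z \<Longrightarrow> ereal (z + c) \<le> U"
  by (cases U) auto

lemma ereal_down: "ereal c \<le> ereal z - L \<Longrightarrow> L \<le> ereal (z - c)"
  by (cases L) auto

lemma alpha_bar_nonneg:
  assumes "feasible l u b z"
  shows "0 \<le> alpha_bar l u z jj pp g"
proof -
  have b: "\<And>i. l i \<le> ereal (z $ i) \<and> ereal (z $ i) \<le> u i" using assms by (simp add: feasible_def)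
  have h1: "\<And>i. 0 \<le> u i - ereal (z $ i)" proof - fix i show "0 \<le> u i - ereal (z $ i)" using b[of i] by (cases "u i") auto qed
  have h2: "\<And>i. 0 \<le> ereal (z $ i) - l i" proof - fix i show "0 \<le> ereal (z $ i) - l i" using b[of i] by (cases "l i") auto qed
  show ?thesis unfolding alpha_bar_def using h1 h2
    by (auto intro!: ereal_div_nonneg)
qed

lemma step:
  fixes zz gr d :: "real^'n::finite" and f :: "real^'n \<Rightarrow> real"
  assumes feas: "feasible l u b zz"
   and gdef: "g = gr $ jj - gr $ pp"
   and A: "0 < Aa" "Aa \<le> Au" and del: "0 < del" "del < 1" and gam: "0 < gam"
   and Dl: "Delta = real_of_ereal (min (alpha_bar l u zz jj pp g) (ereal Aa))"
   and al: "alpha = del ^ mm * Delta"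
   and arm: "f (zz + alpha *\<^sub>R d) \<le> f zz + gam * alpha * (gr \<bullet> d)"
   and d: "d = g *\<^sub>R (axis pp 1 - axis jj 1)"
  shows "feasible l u b (zz + alpha *\<^sub>R d) \<and> gam / Au * (alpha*g)^2 \<le> f zz - f (zz + alpha *\<^sub>R d)"
proof -
  define M where "M = min (alpha_bar l u zz jj pp g) (ereal Aa)"
  have M0: "0 \<le> M" unfolding M_def using alpha_bar_nonneg[OF feas] A by auto
  have MA: "M \<le> ereal Aa" unfolding M_def by auto
  have MD: "M = ereal Delta" using M0 MA unfolding Dl M_def[symmetric] by (cases M) auto
  have D0: "0 \<le> Delta" and DA: "Delta \<le> Aa" using M0 MA MD by auto
  have Dab: "ereal Delta \<le> alpha_bar l u zz jj pp g" using MD unfolding M_def by (metis min.bounded_iff order_refl)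
  have dm: "0 \<le> del ^ mm" "del ^ mm \<le> 1" using del by (auto simp: power_le_one)
  have a0: "0 \<le> alpha" unfolding al using dm D0 by simp
  have aD: "alpha \<le> Delta" unfolding al using dm D0 by (simp add: mult_left_le_one_le)
  have aAu: "alpha \<le> Au" using aD DA A by simp
  have aab: "ereal alpha \<le> alpha_bar l u zz jj pp g" using aD Dab by (meson ereal_less_eq(3) order_trans)
  have grd: "gr \<bullet> d = -(g^2)" unfolding d gdef
    by (simp add: inner_diff_right inner_axis power2_eq_square algebra_simps)
  have dec: "gam / Au * (alpha*g)^2 \<le> gam * alpha * g^2"
  proof -
    have "gam / Au * (alpha*g)^2 = (gam * alpha * g^2) * (alpha / Au)" by (simp add: power_mult_distrib power2_eq_square)
    also have "\<dots> \<le> (gam * alpha * g^2) * 1"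
      using gam a0 aAu A by (intro mult_left_mono) auto
    finally show ?thesis by simp
  qed
  have fdec: "gam / Au * (alpha*g)^2 \<le> f zz - f (zz + alpha *\<^sub>R d)"
    using arm grd dec by simp
  have fb: "\<And>i. l i \<le> ereal (zz $ i) \<and> ereal (zz $ i) \<le> u i" and fs: "(\<Sum>i\<in>UNIV. zz $ i) = b"
    using feas by (auto simp: feasible_def)
  have fbu: "\<And>i c. 0 \<le> c \<Longrightarrow> ereal (zz $ i - c) \<le> u i"
    using fb by (meson diff_ge_0_iff_ge ereal_less_eq(3) order_trans le_diff_eq add_increasing2 order_refl)
  have fbl: "\<And>i c. 0 \<le> c \<Longrightarrow> l i \<le> ereal (zz $ i + c)"
    using fb by (meson ereal_less_eq(3) order_trans le_add_same_cancel1)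
  have comp: "\<And>i. (zz + alpha *\<^sub>R d) $ i = zz $ i + alpha * g * ((if i = pp then 1 else 0) - (if i = jj then 1 else 0))"
    unfolding d by (simp add: axis_def algebra_simps)
  have sum: "(\<Sum>i\<in>UNIV. (zz + alpha *\<^sub>R d) $ i) = b"
    unfolding comp using fs by (simp add: sum.distrib sum_subtractf sum_distrib_left[symmetric] right_diff_distrib)
  have bnd: "l i \<le> ereal ((zz + alpha *\<^sub>R d) $ i) \<and> ereal ((zz + alpha *\<^sub>R d) $ i) \<le> u i" for i
  proof (cases "pp = jj")
    case True
    then show ?thesis unfolding comp using fb[of i] by simp
  next
    case pj: False
    consider "g > 0" | "g < 0" | "g = 0" by linarith
    then show ?thesis
    proof cases
      case 1
      then have "ereal alpha \<le> min (u pp - ereal (zz $ pp)) (ereal (zz $ jj) - l jj) / ereal g"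
        using aab by (simp add: alpha_bar_def)
      then have e: "ereal (alpha * g) \<le> min (u pp - ereal (zz $ pp)) (ereal (zz $ jj) - l jj)"
        using 1 by (rule ereal_le_div[rotated])
      have up: "ereal (zz $ pp + alpha * g) \<le> u pp" using e by (intro ereal_up) simp
      have dn: "l jj \<le> ereal (zz $ jj - alpha * g)" using e by (intro ereal_down) simp
      have ag: "0 \<le> alpha * g" using a0 1 by simp
      show ?thesis
      proof (cases "i = pp")
        case True
        then show ?thesis unfolding comp using pj up fb[of i] ag
          by (auto intro: order_trans fbu fbl)
      next
        case False
        then show ?thesis unfolding comp using pj dn fb[of i] ag
          apply (cases "i = jj")
           apply (auto intro: order_trans fbu fbl)
          done
      qed
    next
      case 2
      then have "ereal alpha \<le> min (ereal (zz $ pp) - l pp) (u jj - ereal (zz $ jj)) / ereal \<bar>g\<bar>"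
        using aab by (simp add: alpha_bar_def)
      then have e: "ereal (alpha * \<bar>g\<bar>) \<le> min (ereal (zz $ pp) - l pp) (u jj - ereal (zz $ jj))"
        using 2 by (intro ereal_le_div) auto
      have up: "ereal (zz $ jj + alpha * \<bar>g\<bar>) \<le> u jj" using e by (intro ereal_up) simp
      have dn: "l pp \<le> ereal (zz $ pp - alpha * \<bar>g\<bar>)" using e by (intro ereal_down) simp
      have ag: "0 \<le> alpha * \<bar>g\<bar>" using a0 by simp
      have gg: "alpha * g = - (alpha * \<bar>g\<bar>)" using 2 by simp
      show ?thesis
      proof (cases "i = pp")
        case True
        then show ?thesis unfolding comp gg using pj dn fb[of i] ag
          by (auto intro: order_trans fbu fbl)
      next
        case False
        then show ?thesis unfolding comp gg using pj up fb[of i] ag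
          apply (cases "i = jj")
           apply (auto intro: order_trans fbu fbl)
          done
      qed
    next
      case 3
      then show ?thesis unfolding comp using fb[of i] by simp
    qed
  qed
  show ?thesis using fdec sum bnd by (simp add: feasible_def)
qed

lemma telesc: "(\<Sum>i=1..n. F i - F (Suc i)) = F 1 - (F (Suc n) :: real)"
  by (induction n) auto

theorem proposition3:
  fixes f :: "real^'n::finite \<Rightarrow> real"
    and grad :: "real^'n \<Rightarrow> real^'n"
    and l u :: "'n \<Rightarrow> ereal" and b :: real
    and tau gam del Al Au :: real
    and x :: "nat \<Rightarrow> real^'n"
    and j :: "nat \<Rightarrow> 'n"
    and p :: "nat \<Rightarrow> nat \<Rightarrow> 'n"
    and z :: "nat \<Rightarrow> nat \<Rightarrow> real^'n"
    and A alpha :: "nat \<Rightarrow> nat \<Rightarrow> real"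
    and m :: "nat \<Rightarrow> nat \<Rightarrow> nat"
  assumes n2: "CARD('n) \<ge> 2"
    and lu: "\<And>i. l i < u i" "\<And>i. l i \<noteq> \<infinity>" "\<And>i. u i \<noteq> -\<infinity>"
    and deriv: "\<And>y. (f has_derivative (\<lambda>h. grad y \<bullet> h)) (at y)"
    and lipschitz: "\<exists>L. \<forall>y w. norm (grad y - grad w) \<le> L * norm (y - w)"
    and params: "0 < tau" "tau \<le> 1" "0 < gam" "gam < 1" "0 < del" "del < 1" "0 < Al" "Al \<le> Au"
    and x0: "feasible l u b (x 0)"
    and L0_compact: "compact {y. feasible l u b y \<and> f y \<le> f (x 0)}"
    and L0_nonempty: "{y. feasible l u b y \<and> f y \<le> f (x 0)} \<noteq> {}"
    and L0_interior: "\<And>y. feasible l u b y \<Longrightarrow> f y \<le> f (x 0) \<Longrightarrow>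
                         \<exists>i. l i < ereal (y $ i) \<and> ereal (y $ i) < u i"
    \<comment> \<open>choice of j(k)\<close>
    and jk: "\<And>k. Dh l u (x k) (j k) \<ge> ereal tau * Max (range (Dh l u (x k)))"
    \<comment> \<open>permutation (p^k_1, ..., p^k_n) of the indices\<close>
    and perm: "\<And>k. bij_betw (p k) {1..CARD('n)} UNIV"
    and z_start: "\<And>k. z k 1 = x k"
    and x_next: "\<And>k. x (Suc k) = z k (CARD('n) + 1)"
    and A_range: "\<And>k i. i \<in> {1..CARD('n)} \<Longrightarrow> Al \<le> A k i \<and> A k i \<le> Au"
    \<comment> \<open>line search: alpha^{k,i} = del^m * Delta^{k,i}, m the number of reductions
        (first m for which the Armijo condition holds)\<close>
    and linesearch: "\<And>k i. i \<in> {1..CARD('n)} \<Longrightarrow>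
       (let zz = z k i; jj = j k; pp = p k i;
            g = grad zz $ jj - grad zz $ pp;
            d = g *\<^sub>R (axis pp 1 - axis jj 1);
            Delta = real_of_ereal (min (alpha_bar l u zz jj pp g) (ereal (A k i)));
            armijo = (\<lambda>a. f (zz + a *\<^sub>R d) \<le> f zz + gam * a * (grad zz \<bullet> d))
        in (\<forall>m'<m k i. \<not> armijo (del ^ m' * Delta))
           \<and> armijo (del ^ m k i * Delta)
           \<and> alpha k i = del ^ m k i * Delta
           \<and> z k (Suc i) = zz + alpha k i *\<^sub>R d)"
  shows "\<forall>k. f (x k) - f (x (Suc k)) \<ge> gam / Au * (norm_excl (j k) (x (Suc k) - x k))^2"
proof
  fix k
  let ?n = "CARD('n)"
  define gk where "gk k i = grad (z k i) $ j k - grad (z k i) $ p k i" for k i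
  define c where "c k i = alpha k i * gk k i" for k i
  have A0: "0 < A k i" "A k i \<le> Au" if "i \<in> {1..?n}" for k i
    using A_range[OF that, of k] params by auto
  have stepk: "feasible l u b (z k (Suc i)) \<and> gam/Au*(c k i)^2 \<le> f (z k i) - f (z k (Suc i))
      \<and> z k (Suc i) = z k i + c k i *\<^sub>R (axis (p k i) 1 - axis (j k) 1)"
    if hi: "i \<in> {1..?n}" and fz: "feasible l u b (z k i)" for k i
  proof -
    note L = linesearch[OF hi, unfolded Let_def]
    define Delta where "Delta = real_of_ereal (min (alpha_bar l u (z k i) (j k) (p k i) (gk k i)) (ereal (A k i)))"
    define d :: "real^'n" where "d = gk k i *\<^sub>R (axis (p k i) 1 - axis (j k) 1)"
    have arm: "f (z k i + (del ^ m k i * Delta) *\<^sub>R d) \<le> f (z k i) + gam * (del ^ m k i * Delta) * (grad (z k i) \<bullet> d)"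
      and al: "alpha k i = del ^ m k i * Delta" and zs: "z k (Suc i) = z k i + alpha k i *\<^sub>R d"
      using L unfolding Delta_def d_def gk_def by auto
    have "feasible l u b (z k i + alpha k i *\<^sub>R d) \<and> gam / Au * (alpha k i * gk k i)^2 \<le> f (z k i) - f (z k i + alpha k i *\<^sub>R d)"
      apply (rule step[OF fz _ A0[OF hi] params(5,6,3) Delta_def al _ d_def, where gr = "grad (z k i)"])
      using arm al gk_def by auto
    then show ?thesis using zs unfolding c_def d_def by simp
  qed
  have feasz: "feasible l u b (x k) \<Longrightarrow> 1 \<le> i \<Longrightarrow> i \<le> ?n + 1 \<Longrightarrow> feasible l u b (z k i)" for k i
  proof (induction i)
    case 0 then show ?case by simp
  next
    case (Suc i)
    show ?case
    proof (cases "i = 0")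
      case True then show ?thesis using Suc z_start by simp
    next
      case False
      then have hi: "i \<in> {1..?n}" using Suc by auto
      have "feasible l u b (z k i)" using Suc hi by auto
      then show ?thesis using stepk[OF hi] by blast
    qed
  qed
  have feasx: "feasible l u b (x k)" for k
  proof (induction k)
    case 0 then show ?case using x0 .
  next
    case (Suc k) then show ?case using feasz[of k "?n+1"] x_next by simp
  qed
  have S: "i \<in> {1..?n} \<Longrightarrow> feasible l u b (z k (Suc i)) \<and> gam/Au*(c k i)^2 \<le> f (z k i) - f (z k (Suc i))
      \<and> z k (Suc i) = z k i + c k i *\<^sub>R (axis (p k i) 1 - axis (j k) 1)" for i
    by (rule stepk) (use feasz[OF feasx[of k]] in auto)
  have fd: "f (x k) - f (x (Suc k)) = (\<Sum>i=1..?n. f (z k i) - f (z k (Suc i)))"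
    using telesc[of "\<lambda>i. f (z k i)" ?n] z_start x_next by simp
  have fge: "gam/Au * (\<Sum>i=1..?n. (c k i)^2) \<le> f (x k) - f (x (Suc k))"
    unfolding fd sum_distrib_left using S by (intro sum_mono) blast
  define ip where "ip = inv_into {1..?n} (p k)"
  define c' where "c' q = c k (ip q)" for q
  have bij: "bij_betw (p k) {1..?n} UNIV" by (rule perm)
  have ipp: "ip (p k i) = i" if "i \<in> {1..?n}" for i
    unfolding ip_def using bij that by (simp add: bij_betw_def inv_into_f_f)
  have cc: "i \<in> {1..?n} \<Longrightarrow> c k i = c' (p k i)" for i unfolding c'_def using ipp by simp
  have sumc: "(\<Sum>i=1..?n. (c k i)^2) = (\<Sum>q\<in>UNIV. (c' q)^2)"
    using sum.reindex_bij_betw[OF bij, of "\<lambda>q. (c' q)^2"] cc by simp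
  have coord: "(x (Suc k) - x k) $ q = c' q" if qj: "q \<noteq> j k" for q
  proof -
    have "(x (Suc k) - x k) $ q = (\<Sum>i=1..?n. z k (Suc i) $ q - z k i $ q)"
      using telesc[of "\<lambda>i. - (z k i $ q)" ?n] z_start x_next by simp
    also have "\<dots> = (\<Sum>i=1..?n. (if p k i = q then c' (p k i) else 0))"
      apply (rule sum.cong[OF refl])
      subgoal for i using S[of i] cc[of i] qj by (auto simp: axis_def)
      done
    also have "\<dots> = (\<Sum>q'\<in>UNIV. (if q' = q then c' q' else 0))"
      using sum.reindex_bij_betw[OF bij, of "\<lambda>q'. if q' = q then c' q' else 0"] by simp
    also have "\<dots> = c' q" by simp
    finally show ?thesis .
  qed
  have "(norm_excl (j k) (x (Suc k) - x k))^2 = (\<Sum>q\<in>UNIV - {j k}. (c' q)^2)"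
    unfolding norm_excl_def using coord by (simp add: sum_nonneg)
  also have "\<dots> \<le> (\<Sum>q\<in>UNIV. (c' q)^2)" by (intro sum_mono2) auto
  finally have nle: "(norm_excl (j k) (x (Suc k) - x k))^2 \<le> (\<Sum>i=1..?n. (c k i)^2)" using sumc by simp
  have "gam / Au * (norm_excl (j k) (x (Suc k) - x k))^2 \<le> gam/Au * (\<Sum>i=1..?n. (c k i)^2)"
    using nle params by (intro mult_left_mono) auto
  then show "gam / Au * (norm_excl (j k) (x (Suc k) - x k))^2 \<le> f (x k) - f (x (Suc k))" using fge by linarith
qed

end
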